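(* Let $r,t\ge1$, $\varepsilon\ge 0$, let $\boldsymbol\Sigma\in\mathbb R^{r\times t}$ be a rectangular diagonal matrix with nonnegative diagonal entries and $\boldsymbol\Lambda\in\mathbb R^{t\times t}$ a diagonal matrix with nonnegative diagonal entries. Then the minimization problem $$\min_{\boldsymbol\Delta\in\mathbb C^{r\times t},\ \|\boldsymbol\Delta\|_2\le\varepsilon}\ \det\!\left[\mathbf I_r+(\boldsymbol\Sigma+\boldsymbol\Delta)\boldsymbol\Lambda(\boldsymbol\Sigma+\boldsymbol\Delta)^H\right]$$ has a minimizer $\boldsymbol\Delta$ that is a (rectangular) diagonal matrix.
   Context: $\|\cdot\|_2$ denotes the spectral norm (largest singular value). A rectangular $r\times t$ matrix is diagonal if all entries $(i,j)$ with $i\ne j$ vanish. *)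

theory Defs
  imports "Jordan_Normal_Form.Schur_Decomposition" "Jordan_Normal_Form.Determinant"
begin

definition vec_2norm :: "complex vec \<Rightarrow> real" where
  "vec_2norm x = sqrt (\<Sum>i<dim_vec x. (cmod (x $ i))\<^sup>2)"

definition spectral_norm :: "complex mat \<Rightarrow> real" where
  "spectral_norm A = Sup {vec_2norm (A *\<^sub>v x) | x. x \<in> carrier_vec (dim_col A) \<and> vec_2norm x \<le> 1}"

definition rect_diagonal :: "'a::zero mat \<Rightarrow> bool" where
  "rect_diagonal A \<longleftrightarrow> (\<forall>i<dim_row A. \<forall>j<dim_col A. i \<noteq> j \<longrightarrow> A $$ (i,j) = 0)"

definition cmat :: "real mat \<Rightarrow> complex mat" where
  "cmat A = map_mat complex_of_real A"

definition objective :: "nat \<Rightarrow> real mat \<Rightarrow> real mat \<Rightarrow> complex mat \<Rightarrow> complex" where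
  "objective r \<Sigma> \<Lambda> \<Delta> =
     det (1\<^sub>m r + (cmat \<Sigma> + \<Delta>) * cmat \<Lambda> * mat_adjoint (cmat \<Sigma> + \<Delta>))"

end

theory Submission
  imports Defs "HOL-Analysis.L2_Norm"
begin


definition qf :: "complex mat \<Rightarrow> (nat \<Rightarrow> complex) \<Rightarrow> complex" where
 "qf A x = (\<Sum>i=0..<dim_row A. \<Sum>j=0..<dim_row A. cnj (x i) * A $$ (i,j) * x j)"

definition nsq :: "nat \<Rightarrow> (nat \<Rightarrow> complex) \<Rightarrow> real" where
  "nsq n x = (\<Sum>i=0..<n. (cmod (x i))\<^sup>2)"

lemma eig_det:
  fixes A :: "complex mat"
  assumes A: "A \<in> carrier_mat n n"
  shows "\<exists>es. det A = prod_list es \<and> (\<forall>e\<in>set es. eigenvalue A e)"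
proof -
  obtain es where cp: "char_poly A = (\<Prod>a\<leftarrow>es. [:- a, 1:])" and len: "length es = n"
    using char_poly_factorized[OF A] by blast
  have "poly (char_poly A) 0 = det (- (char_matrix A 0))" by (rule char_poly_matrix[OF A])
  also have "- (char_matrix A 0) = (-1) \<cdot>\<^sub>m A"
    using A by (auto simp: char_matrix_def)
  also have "det \<dots> = (-1)^n * det A" using A by simp
  finally have 1: "poly (char_poly A) 0 = (-1)^n * det A" .
  have 2: "poly (\<Prod>a\<leftarrow>es. [:- a, 1:]) 0 = (-1)^length es * prod_list es"
    by (induct es) (auto simp: poly_prod_list)
  from 1 2 cp len have "(-1)^n * det A = (-1)^n * prod_list es" by simp
  hence "det A = prod_list es" by simp
  moreover have "\<forall>e\<in>set es. eigenvalue A e"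
  proof
    fix e assume "e \<in> set es"
    hence "poly (char_poly A) e = 0" unfolding cp
      by (induct es) (auto simp: poly_prod_list)
    thus "eigenvalue A e" using eigenvalue_root_char_poly[OF A] by simp
  qed
  ultimately show ?thesis by blast
qed

lemma eig_qf:
  fixes A :: "complex mat"
  assumes A: "A \<in> carrier_mat n n" and e: "eigenvalue A e"
  shows "\<exists>x. nsq n x > 0 \<and> qf A x = e * of_real (nsq n x)"
proof -
  obtain v where v: "v \<in> carrier_vec n" "v \<noteq> 0\<^sub>v n" "A *\<^sub>v v = e \<cdot>\<^sub>v v"
    using e A unfolding eigenvalue_def eigenvector_def by auto
  have row: "(\<Sum>j=0..<n. A $$ (i,j) * v $ j) = e * v $ i" if i: "i < n" for i
  proof -
    have "(A *\<^sub>v v) $ i = e * v $ i" using v i by simp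
    moreover have "(A *\<^sub>v v) $ i = (\<Sum>j=0..<n. A $$ (i,j) * v $ j)"
      using A v(1) i by (subst index_mult_mat_vec) (auto simp: scalar_prod_def)
    ultimately show ?thesis by simp
  qed
  obtain i where i: "i < n" "v $ i \<noteq> 0"
    using v by (metis eq_vecI carrier_vecD index_zero_vec(1) index_zero_vec(2))
  have pos: "nsq n (\<lambda>i. v $ i) > 0" unfolding nsq_def
  proof (rule sum_pos2[of _ i])
  qed (use i in auto)
  have "qf A (\<lambda>i. v $ i) = (\<Sum>i=0..<n. cnj (v $ i) * (\<Sum>j=0..<n. A $$ (i,j) * v $ j))"
    unfolding qf_def using A by (simp add: sum_distrib_left mult.assoc)
  also have "\<dots> = (\<Sum>i=0..<n. e * (v $ i * cnj (v $ i)))"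
    by (rule sum.cong, simp, subst row, auto simp: ac_simps)
  also have "\<dots> = e * of_real (nsq n (\<lambda>i. v $ i))"
    unfolding nsq_def by (simp add: sum_distrib_left complex_norm_square[symmetric] del: of_real_power)
  finally show ?thesis using pos by blast
qed

lemma prod_list_cmod_ge1: "(\<forall>e\<in>set es. cmod e \<ge> 1) \<Longrightarrow> cmod (prod_list es) \<ge> 1"
proof (induct es)
  case (Cons a es)
  hence "cmod a \<ge> 1" "cmod (prod_list es) \<ge> 1" by auto
  hence "cmod a * cmod (prod_list es) \<ge> 1 * 1" by (intro mult_mono) auto
  thus ?case by (simp add: norm_mult)
qed simp

lemma prod_list_real_ge1: "(\<forall>e\<in>set es. \<exists>r. r \<ge> 1 \<and> e = of_real r) \<Longrightarrow> \<exists>R. R \<ge> 1 \<and> prod_list es = of_real R"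
proof (induct es)
  case (Cons a es)
  then obtain r R where "r \<ge> 1" "a = of_real r" "R \<ge> 1" "prod_list es = of_real R" by auto
  moreover have "r * R \<ge> 1 * 1" using calculation by (intro mult_mono) auto
  ultimately show ?case by (intro exI[of _ "r*R"]) auto
qed (auto intro: exI[of _ 1])

lemma L3:
  fixes A :: "complex mat"
  assumes A: "A \<in> carrier_mat n n" and pos: "\<And>x. Re (qf A x) \<ge> nsq n x"
  shows "cmod (det A) \<ge> 1"
proof -
  obtain es where d: "det A = prod_list es" and ev: "\<forall>e\<in>set es. eigenvalue A e"
    using eig_det[OF A] by blast
  have "\<forall>e\<in>set es. cmod e \<ge> 1"
  proof
    fix e assume "e \<in> set es"
    then obtain x where x: "nsq n x > 0" "qf A x = e * of_real (nsq n x)"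
      using eig_qf[OF A] ev by blast
    have "Re (qf A x) = Re e * nsq n x" using x by simp
    with pos[of x] x(1) have "Re e * nsq n x \<ge> 1 * nsq n x" by simp
    hence "Re e \<ge> 1" using x(1) by (simp add: mult_le_cancel_right)
    thus "cmod e \<ge> 1" using abs_Re_le_cmod[of e] by linarith
  qed
  thus ?thesis unfolding d by (rule prod_list_cmod_ge1)
qed

lemma L4:
  fixes A :: "complex mat"
  assumes A: "A \<in> carrier_mat n n" and pos: "\<And>x. \<exists>q. qf A x = of_real q \<and> q \<ge> nsq n x"
  shows "\<exists>R. R \<ge> 1 \<and> det A = of_real R"
proof -
  obtain es where d: "det A = prod_list es" and ev: "\<forall>e\<in>set es. eigenvalue A e"
    using eig_det[OF A] by blast
  have "\<forall>e\<in>set es. \<exists>r. r \<ge> 1 \<and> e = of_real r"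
  proof
    fix e assume "e \<in> set es"
    then obtain x where x: "nsq n x > 0" "qf A x = e * of_real (nsq n x)"
      using eig_qf[OF A] ev by blast
    obtain q where q: "qf A x = of_real q" "q \<ge> nsq n x" using pos by blast
    have "e = of_real (q / nsq n x)" using x q by (simp add: field_simps)
    moreover have "q / nsq n x \<ge> 1" using x q by simp
    ultimately show "\<exists>r. r \<ge> 1 \<and> e = of_real r" by blast
  qed
  thus ?thesis unfolding d by (rule prod_list_real_ge1)
qed

lemma det_nil:
  fixes F :: "complex mat"
  assumes F: "F \<in> carrier_mat n n" and FF: "F * F = 0\<^sub>m n n"
  shows "det (1\<^sub>m n + F) = 1"
proof -
  have B: "1\<^sub>m n + F \<in> carrier_mat n n" using F by simp
  obtain es where d: "det (1\<^sub>m n + F) = prod_list es" and ev: "\<forall>e\<in>set es. eigenvalue (1\<^sub>m n + F) e"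
    using eig_det[OF B] by blast
  have "\<forall>e\<in>set es. e = 1"
  proof
    fix e assume "e \<in> set es"
    then obtain v where v: "v \<in> carrier_vec n" "v \<noteq> 0\<^sub>v n" "(1\<^sub>m n + F) *\<^sub>v v = e \<cdot>\<^sub>v v"
      using ev B unfolding eigenvalue_def eigenvector_def by fastforce
    have "(1\<^sub>m n + F) *\<^sub>v v = v + F *\<^sub>v v" using F v(1) add_mult_distrib_mat_vec[of "1\<^sub>m n" n n F v]
      by (simp add: add_mult_distrib_mat_vec)
    hence eq: "v + F *\<^sub>v v = e \<cdot>\<^sub>v v" using v(3) by simp
    have Fv: "F *\<^sub>v v = (e - 1) \<cdot>\<^sub>v v"
    proof (rule eq_vecI)
      fix i assume "i < dim_vec ((e - 1) \<cdot>\<^sub>v v)"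
      hence i: "i < n" using v(1) by simp
      have "(v + F *\<^sub>v v) $ i = (e \<cdot>\<^sub>v v) $ i" using eq by simp
      hence "v $ i + (F *\<^sub>v v) $ i = e * v $ i" using i v(1) F by simp
      thus "(F *\<^sub>v v) $ i = ((e - 1) \<cdot>\<^sub>v v) $ i" using i v(1) by (simp add: algebra_simps)
    qed (use F v(1) in simp)
    have "(F * F) *\<^sub>v v = F *\<^sub>v (F *\<^sub>v v)" using F v(1) by (simp add: assoc_mult_mat_vec)
    also have "\<dots> = (e - 1) \<cdot>\<^sub>v (F *\<^sub>v v)" using F v(1) Fv by (simp add: mult_mat_vec)
    also have "\<dots> = ((e - 1) * (e - 1)) \<cdot>\<^sub>v v" using Fv by (simp add: smult_smult_assoc)
    moreover have "(F * F) *\<^sub>v v = 0\<^sub>v n" unfolding FF using v(1) by (intro eq_vecI) (auto simp: scalar_prod_def)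
    ultimately have "((e - 1) * (e - 1)) \<cdot>\<^sub>v v = 0\<^sub>v n" by simp
    moreover obtain i where i: "i < n" "v $ i \<noteq> 0"
      using v by (metis eq_vecI carrier_vecD index_zero_vec(1) index_zero_vec(2))
    ultimately have "(e - 1) * (e - 1) * v $ i = 0"
      by (metis index_smult_vec(1) index_zero_vec(1) v(1) carrier_vecD)
    thus "e = 1" using i by simp
  qed
  hence "prod_list es = 1" by (induct es) auto
  thus ?thesis using d by simp
qed

definition dmat :: "nat \<Rightarrow> (nat \<Rightarrow> complex) \<Rightarrow> complex mat" where
  "dmat n c = mat n n (\<lambda>(i,j). if i = j then c i else 0)"

lemma dmat_carrier[simp]: "dmat n c \<in> carrier_mat n n" by (simp add: dmat_def)

lemma dmat_mult_left:
  assumes A: "A \<in> carrier_mat n m"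
  shows "dmat n c * A = mat n m (\<lambda>(i,j). c i * A $$ (i,j))"
proof (rule eq_matI)
  fix i j assume i: "i < dim_row (mat n m (\<lambda>(i,j). c i * A $$ (i,j)))"
    and j: "j < dim_col (mat n m (\<lambda>(i,j). c i * A $$ (i,j)))"
  hence "(dmat n c * A) $$ (i,j) = (\<Sum>l=0..<n. (if i = l then c i else 0) * A $$ (l,j))"
    using A by (auto simp: dmat_def scalar_prod_def)
  also have "\<dots> = c i * A $$ (i,j)" using i by (simp add: if_distrib[of "\<lambda>x. x * _"] cong: if_cong)
  finally show "(dmat n c * A) $$ (i,j) = mat n m (\<lambda>(i,j). c i * A $$ (i,j)) $$ (i,j)" using i j by simp
qed (use A in \<open>auto simp: dmat_def\<close>)

lemma dmat_mult_right:
  assumes A: "A \<in> carrier_mat m n"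
  shows "A * dmat n c = mat m n (\<lambda>(i,j). A $$ (i,j) * c j)"
proof (rule eq_matI)
  fix i j assume i: "i < dim_row (mat m n (\<lambda>(i,j). A $$ (i,j) * c j))"
    and j: "j < dim_col (mat m n (\<lambda>(i,j). A $$ (i,j) * c j))"
  hence "(A * dmat n c) $$ (i,j) = (\<Sum>l=0..<n. A $$ (i,l) * (if l = j then c l else 0))"
    using A by (auto simp: dmat_def scalar_prod_def)
  also have "\<dots> = A $$ (i,j) * c j" using j by (simp add: if_distrib[of "\<lambda>x. _ * x"] cong: if_cong)
  finally show "(A * dmat n c) $$ (i,j) = mat m n (\<lambda>(i,j). A $$ (i,j) * c j) $$ (i,j)" using i j by simp
qed (use A in \<open>auto simp: dmat_def\<close>)

lemma det_dmat: "det (dmat n c) = (\<Prod>i=0..<n. c i)"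
proof -
  have "det (dmat n c) = prod_list (diag_mat (dmat n c))"
    by (rule det_upper_triangular) (auto simp: dmat_def upper_triangular_def)
  also have "\<dots> = (\<Prod>i=0..<n. dmat n c $$ (i,i))"
    by (simp add: diag_mat_def prod.distinct_set_conv_list[symmetric] atLeastLessThan_upt[symmetric] dmat_def)
  also have "\<dots> = (\<Prod>i=0..<n. c i)" by (rule prod.cong) (auto simp: dmat_def)
  finally show ?thesis .
qed

lemma L3w:
  fixes A :: "complex mat"
  assumes A: "A \<in> carrier_mat n n" and w: "\<And>i. i < n \<Longrightarrow> w i > 0"
    and pos: "\<And>x. Re (qf A x) \<ge> (\<Sum>i=0..<n. w i * (cmod (x i))\<^sup>2)"
  shows "cmod (det A) \<ge> (\<Prod>i=0..<n. w i)"
proof -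
  define c where "c i = complex_of_real (1 / sqrt (w i))" for i
  define A' where "A' = dmat n c * A * dmat n c"
  have A'eq: "A' = mat n n (\<lambda>(i,j). c i * A $$ (i,j) * c j)"
    unfolding A'_def dmat_mult_left[OF A] by (subst dmat_mult_right) auto
  have A'c: "A' \<in> carrier_mat n n" unfolding A'eq by simp
  have qf': "qf A' x = qf A (\<lambda>i. c i * x i)" for x
    unfolding qf_def A'eq using A
    by (auto intro!: sum.cong simp: c_def ac_simps)
  have "Re (qf A' x) \<ge> nsq n x" for x
  proof -
    have "(\<Sum>i=0..<n. w i * (cmod (c i * x i))\<^sup>2) = nsq n x"
      unfolding nsq_def
    proof (rule sum.cong)
      fix i assume "i \<in> {0..<n}"
      hence wi: "w i > 0" using w by auto
      have "w i * (cmod (c i * x i))\<^sup>2 = w i * (1 / sqrt (w i))\<^sup>2 * (cmod (x i))\<^sup>2"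
        unfolding c_def norm_mult power_mult_distrib norm_of_real using wi by simp
      also have "\<dots> = (cmod (x i))\<^sup>2" using wi by (simp add: power_divide)
      finally show "w i * (cmod (c i * x i))\<^sup>2 = (cmod (x i))\<^sup>2" .
    qed simp
    thus ?thesis using pos[of "\<lambda>i. c i * x i"] unfolding qf' by simp
  qed
  from L3[OF A'c this] have 1: "cmod (det A') \<ge> 1" .
  have "det A' = (\<Prod>i=0..<n. c i) * det A * (\<Prod>i=0..<n. c i)"
    unfolding A'_def using A
    using det_mult[of "dmat n c * A" n "dmat n c"] det_mult[of "dmat n c" n A]
    by (simp add: det_dmat)
  hence "cmod (det A') = (\<Prod>i=0..<n. 1 / sqrt (w i))^2 * cmod (det A)"
  proof -
    assume d: "det A' = (\<Prod>i=0..<n. c i) * det A * (\<Prod>i=0..<n. c i)"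
    have "cmod (\<Prod>i=0..<n. c i) = (\<Prod>i=0..<n. cmod (c i))" by (rule prod_norm[symmetric])
    also have "\<dots> = (\<Prod>i=0..<n. 1 / sqrt (w i))"
      by (rule prod.cong) (auto simp: c_def norm_divide dest: w intro!: abs_of_nonneg)
    finally show ?thesis unfolding d norm_mult power2_eq_square by simp
  qed
  also have "(\<Prod>i=0..<n. 1 / sqrt (w i))^2 = 1 / (\<Prod>i=0..<n. w i)"
  proof -
    have "(\<Prod>i=0..<n. sqrt (w i))^2 = (\<Prod>i=0..<n. (sqrt (w i))^2)" by (simp add: prod_power_distrib)
    also have "\<dots> = (\<Prod>i=0..<n. w i)" by (rule prod.cong) (auto dest: w)
    finally show ?thesis by (simp add: power_divide prod_dividef)
  qed
  finally have "cmod (det A) / (\<Prod>i=0..<n. w i) \<ge> 1" using 1 by simp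
  moreover have "(\<Prod>i=0..<n. w i) > 0" using w by (intro prod_pos) auto
  ultimately show ?thesis by (simp add: field_simps)
qed

lemma sum4_swap: "(\<Sum>i\<in>I. \<Sum>j\<in>I. \<Sum>b\<in>I. \<Sum>a\<in>I. f i j b a) = (\<Sum>a\<in>I. \<Sum>b\<in>I. \<Sum>i\<in>I. \<Sum>j\<in>I. f i j b a)"
proof -
  have "(\<Sum>i\<in>I. \<Sum>j\<in>I. \<Sum>b\<in>I. \<Sum>a\<in>I. f i j b a) = (\<Sum>i\<in>I. \<Sum>j\<in>I. \<Sum>a\<in>I. \<Sum>b\<in>I. f i j b a)"
    by (rule sum.cong[OF refl], rule sum.cong[OF refl], rule sum.swap)
  also have "\<dots> = (\<Sum>i\<in>I. \<Sum>a\<in>I. \<Sum>j\<in>I. \<Sum>b\<in>I. f i j b a)"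
    by (rule sum.cong[OF refl], rule sum.swap)
  also have "\<dots> = (\<Sum>a\<in>I. \<Sum>i\<in>I. \<Sum>j\<in>I. \<Sum>b\<in>I. f i j b a)"
    by (rule sum.swap)
  also have "\<dots> = (\<Sum>a\<in>I. \<Sum>i\<in>I. \<Sum>b\<in>I. \<Sum>j\<in>I. f i j b a)"
    by (rule sum.cong[OF refl], rule sum.cong[OF refl], rule sum.swap)
  also have "\<dots> = (\<Sum>a\<in>I. \<Sum>b\<in>I. \<Sum>i\<in>I. \<Sum>j\<in>I. f i j b a)"
    by (rule sum.cong[OF refl], rule sum.swap)
  finally show ?thesis .
qed

lemma qf_congr:
  fixes M B :: "complex mat"
  assumes M: "M \<in> carrier_mat n n" and B: "B \<in> carrier_mat n n"
  shows "qf (mat n n (\<lambda>(i,j). cnj (B $$ (j,i))) * M * B) y = qf M (\<lambda>b. \<Sum>j=0..<n. B $$ (b,j) * y j)"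
proof -
  let ?Bh = "mat n n (\<lambda>(i,j). cnj (B $$ (j,i)))"
  have N: "(?Bh * M * B) $$ (i,j) = (\<Sum>b=0..<n. (\<Sum>a=0..<n. cnj (B $$ (a,i)) * M $$ (a,b)) * B $$ (b,j))"
    if "i < n" "j < n" for i j
    using that M B by (simp add: scalar_prod_def)
  have "qf (?Bh * M * B) y = (\<Sum>i=0..<n. \<Sum>j=0..<n. \<Sum>b=0..<n. \<Sum>a=0..<n.
        cnj (y i) * cnj (B $$ (a,i)) * M $$ (a,b) * B $$ (b,j) * y j)"
  proof -
    have dr: "dim_row (?Bh * M * B) = n" by simp
    have "qf (?Bh * M * B) y = (\<Sum>i=0..<n. \<Sum>j=0..<n. cnj (y i) *
        (\<Sum>b=0..<n. (\<Sum>a=0..<n. cnj (B $$ (a,i)) * M $$ (a,b)) * B $$ (b,j)) * y j)"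
      unfolding qf_def using M B
      by (subst (1 2) dr[symmetric], intro sum.cong refl) (simp_all add: N dr del: index_mult_mat)
    thus ?thesis by (simp add: sum_distrib_left sum_distrib_right mult.assoc)
  qed
  also have "\<dots> = (\<Sum>a=0..<n. \<Sum>b=0..<n. \<Sum>i=0..<n. \<Sum>j=0..<n.
        cnj (y i) * cnj (B $$ (a,i)) * M $$ (a,b) * B $$ (b,j) * y j)"
    by (rule sum4_swap)
  also have "\<dots> = (\<Sum>a=0..<n. \<Sum>b=0..<n. \<Sum>j=0..<n. \<Sum>i=0..<n.
        cnj (y i) * cnj (B $$ (a,i)) * M $$ (a,b) * B $$ (b,j) * y j)"
    by (rule sum.cong[OF refl], rule sum.cong[OF refl], rule sum.swap)
  also have "\<dots> = qf M (\<lambda>b. \<Sum>j=0..<n. B $$ (b,j) * y j)"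
    unfolding qf_def using M
    by (simp add: sum_distrib_left sum_distrib_right mult.assoc mult.left_commute)
  finally show ?thesis .
qed

definition mv :: "complex mat \<Rightarrow> (nat \<Rightarrow> complex) \<Rightarrow> nat \<Rightarrow> complex" where
  "mv X x i = (\<Sum>j=0..<dim_col X. X $$ (i,j) * x j)"

lemma mv_mult:
  assumes X: "X \<in> carrier_mat n n" and Y: "Y \<in> carrier_mat n n" and i: "i < n"
  shows "mv X (mv Y y) i = mv (X * Y) y i"
proof -
  have "mv X (mv Y y) i = (\<Sum>j=0..<n. \<Sum>b=0..<n. X $$ (i,j) * Y $$ (j,b) * y b)"
    unfolding mv_def using X Y by (simp add: sum_distrib_left mult.assoc)
  also have "\<dots> = (\<Sum>b=0..<n. \<Sum>j=0..<n. X $$ (i,j) * Y $$ (j,b) * y b)" by (rule sum.swap)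
  also have "\<dots> = mv (X * Y) y i"
    unfolding mv_def using X Y i by (simp add: scalar_prod_def sum_distrib_right)
  finally show ?thesis .
qed

lemma mv_one: "i < n \<Longrightarrow> mv (1\<^sub>m n) y i = y i"
  unfolding mv_def by (simp add: if_distrib[of "\<lambda>x. x * _"] cong: if_cong)

lemma L2:
  fixes M X :: "complex mat"
  assumes M: "M \<in> carrier_mat n n" and X: "X \<in> carrier_mat n n"
    and q: "\<And>x. \<exists>q. qf M x = of_real q \<and> q \<ge> nsq n x \<and> q \<ge> nsq n (mv X x)"
  shows "Re (det M) \<ge> (cmod (det X))\<^sup>2"
proof -
  obtain R where R: "R \<ge> 1" "det M = of_real R"
    using L4[OF M] q by blast
  show ?thesis
  proof (cases "det X = 0")
    case True thus ?thesis using R by simp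
  next
    case False
    define Xi where "Xi = (1 / det X) \<cdot>\<^sub>m adj_mat X"
    have Xi: "Xi \<in> carrier_mat n n" unfolding Xi_def using adj_mat[OF X] by simp
    have XXi: "X * Xi = 1\<^sub>m n" unfolding Xi_def using adj_mat[OF X] X False
      by (simp add: mult_smult_distrib[of _ n n _ n], intro eq_matI, auto)
    define Xh where "Xh = mat n n (\<lambda>(i,j). cnj (Xi $$ (j,i)))"
    define N where "N = Xh * M * Xi"
    have N: "N \<in> carrier_mat n n" unfolding N_def Xh_def using M Xi
      by (intro mult_carrier_mat[of _ n n] ) auto
    have "Re (qf N y) \<ge> nsq n y" for y
    proof -
      have e: "qf N y = qf M (mv Xi y)"
      proof -
        have "mv Xi y = (\<lambda>b. \<Sum>j=0..<n. Xi $$ (b,j) * y j)" using Xi by (intro ext) (simp add: mv_def)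
        thus ?thesis using qf_congr[OF M Xi, of y] unfolding N_def Xh_def by simp
      qed
      obtain qq where qq: "qf M (mv Xi y) = of_real qq" "qq \<ge> nsq n (mv X (mv Xi y))"
        using q by blast
      have "nsq n (mv X (mv Xi y)) = nsq n y"
        unfolding nsq_def by (rule sum.cong) (auto simp: mv_mult[OF X Xi] XXi mv_one)
      thus ?thesis using e qq by simp
    qed
    from L3[OF N this] have N1: "cmod (det N) \<ge> 1" .
    interpret cj: comm_ring_hom cnj by standard auto
    have "det Xh = cnj (det Xi)"
    proof -
      have "Xh = map_mat cnj (transpose_mat Xi)" unfolding Xh_def using Xi by auto
      thus ?thesis using det_transpose[OF Xi] by (simp add: cj.hom_det)
    qed
    hence dN: "det N = cnj (det Xi) * det M * det Xi"
    proof -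
      have "Xh * M \<in> carrier_mat n n" using M unfolding Xh_def by (intro mult_carrier_mat[of _ n n]) auto
      thus ?thesis
        unfolding N_def using det_mult[of "Xh * M" n Xi] det_mult[of Xh n M] M Xi \<open>det Xh = cnj (det Xi)\<close>
        by (simp add: Xh_def)
    qed
    have "det X * det Xi = 1" using det_mult[OF X Xi] XXi by simp
    hence "cmod (det X) * cmod (det Xi) = 1" by (metis norm_mult norm_one)
    moreover have "cmod (det N) = cmod (det Xi)^2 * R"
      unfolding dN R(2) using R by (simp add: norm_mult power2_eq_square)
    ultimately have "(cmod (det X))\<^sup>2 * cmod (det N) = R"
    proof -
      assume a: "cmod (det X) * cmod (det Xi) = 1" "cmod (det N) = cmod (det Xi)^2 * R"
      have "(cmod (det X))\<^sup>2 * cmod (det N) = (cmod (det X) * cmod (det Xi))^2 * R"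
        unfolding a(2) by (simp add: power_mult_distrib)
      thus ?thesis using a(1) by simp
    qed
    hence "(cmod (det X))\<^sup>2 * 1 \<le> R" using N1
      by (metis mult_left_mono zero_le_power2)
    thus ?thesis using R by simp
  qed
qed

lemma vec_2norm_nsq: "vec_2norm x = sqrt (nsq (dim_vec x) (\<lambda>i. x $ i))"
  unfolding vec_2norm_def nsq_def by (simp add: atLeast0LessThan)

lemma nsq_nonneg: "nsq n x \<ge> 0" unfolding nsq_def by (intro sum_nonneg) auto

lemma mulvec_mv: "A \<in> carrier_mat r t \<Longrightarrow> i < r \<Longrightarrow> (A *\<^sub>v vec t z) $ i = mv A z i"
  unfolding mv_def by (simp add: scalar_prod_def)

lemma spec_bound:
  fixes D :: "complex mat"
  assumes D: "D \<in> carrier_mat r t" and sn: "spectral_norm D \<le> \<epsilon>"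
  shows "nsq r (mv D z) \<le> \<epsilon>\<^sup>2 * nsq t z"
proof -
  define S where "S = {vec_2norm (D *\<^sub>v x) | x. x \<in> carrier_vec (dim_col D) \<and> vec_2norm x \<le> 1}"
  define C where "C = sqrt (\<Sum>i=0..<r. (\<Sum>j=0..<t. cmod (D $$ (i,j)))\<^sup>2)"
  have bdd: "bdd_above S"
  proof (rule bdd_aboveI)
    fix y assume "y \<in> S"
    then obtain x where x: "x \<in> carrier_vec t" "vec_2norm x \<le> 1" "y = vec_2norm (D *\<^sub>v x)"
      unfolding S_def using D by auto
    have xj: "cmod (x $ j) \<le> 1" if j: "j < t" for j
    proof -
      have "(cmod (x $ j))\<^sup>2 \<le> nsq t (\<lambda>i. x $ i)"
        unfolding nsq_def using j by (intro member_le_sum) auto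
      also have "\<dots> \<le> 1" using x(2) x(1) unfolding vec_2norm_nsq
        by simp
      finally show ?thesis by (simp add: power_le_one_iff abs_le_iff)
    qed
    have "nsq r (\<lambda>i. (D *\<^sub>v x) $ i) \<le> (\<Sum>i=0..<r. (\<Sum>j=0..<t. cmod (D $$ (i,j)))\<^sup>2)"
      unfolding nsq_def
    proof (rule sum_mono)
      fix i assume i: "i \<in> {0..<r}"
      have "cmod ((D *\<^sub>v x) $ i) = cmod (\<Sum>j=0..<t. D $$ (i,j) * x $ j)"
        using D x(1) i by (simp add: scalar_prod_def)
      also have "\<dots> \<le> (\<Sum>j=0..<t. cmod (D $$ (i,j)) * cmod (x $ j))"
        by (rule order_trans[OF norm_sum]) (simp add: norm_mult)
      also have "\<dots> \<le> (\<Sum>j=0..<t. cmod (D $$ (i,j)))"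
        by (intro sum_mono) (use xj in \<open>auto intro: mult_left_le\<close>)
      finally show "(cmod ((D *\<^sub>v x) $ i))\<^sup>2 \<le> (\<Sum>j=0..<t. cmod (D $$ (i,j)))\<^sup>2"
        by (intro power_mono) auto
    qed
    thus "y \<le> C" unfolding x(3) C_def vec_2norm_nsq using D by simp
  qed
  have sup: "\<And>x. x \<in> carrier_vec t \<Longrightarrow> vec_2norm x \<le> 1 \<Longrightarrow> vec_2norm (D *\<^sub>v x) \<le> \<epsilon>"
  proof -
    fix x assume "x \<in> carrier_vec t" "vec_2norm x \<le> 1"
    hence "vec_2norm (D *\<^sub>v x) \<in> S" unfolding S_def using D by auto
    hence "vec_2norm (D *\<^sub>v x) \<le> Sup S" by (rule cSup_upper[OF _ bdd])
    thus "vec_2norm (D *\<^sub>v x) \<le> \<epsilon>" using sn unfolding spectral_norm_def S_def by simp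
  qed
  define v where "v = vec t z"
  have v: "v \<in> carrier_vec t" unfolding v_def by simp
  have nv: "nsq t (\<lambda>i. v $ i) = nsq t z" unfolding nsq_def v_def by simp
  have nDv: "nsq r (\<lambda>i. (D *\<^sub>v v) $ i) = nsq r (mv D z)"
    unfolding nsq_def v_def using D by (intro sum.cong) (auto simp: mv_def scalar_prod_def)
  show ?thesis
  proof (cases "nsq t z = 0")
    case True
    hence "\<forall>j\<in>{0..<t}. (cmod (z j))\<^sup>2 = 0"
      unfolding nsq_def by (subst sum_nonneg_eq_0_iff[symmetric]) auto
    hence "\<And>j. j < t \<Longrightarrow> z j = 0" by auto
    hence "\<And>i. mv D z i = 0" unfolding mv_def using D by auto
    thus ?thesis using True by (simp add: nsq_def)
  next
    case False
    define N where "N = sqrt (nsq t z)"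
    have N: "N > 0" unfolding N_def using False nsq_nonneg[of t z] by simp
    define x where "x = (1 / N) \<cdot>\<^sub>v v"
    have x: "x \<in> carrier_vec t" unfolding x_def using v by simp
    have nx: "nsq t (\<lambda>i. x $ i) = (1/N)\<^sup>2 * nsq t z"
      unfolding nsq_def x_def v_def using N by (simp add: sum_distrib_left norm_mult power_mult_distrib norm_divide power_divide)
    hence "vec_2norm x = 1" unfolding vec_2norm_nsq using x N False nsq_nonneg[of t z]
      by (simp add: N_def power_divide)
    from sup[OF x] this have "vec_2norm (D *\<^sub>v x) \<le> \<epsilon>" by simp
    moreover have "D *\<^sub>v x = (1/N) \<cdot>\<^sub>v (D *\<^sub>v v)" unfolding x_def using D v
      by (simp add: mult_mat_vec)
    moreover have "nsq r (\<lambda>i. ((1/N) \<cdot>\<^sub>v (D *\<^sub>v v)) $ i) = (1/N)\<^sup>2 * nsq r (\<lambda>i. (D *\<^sub>v v) $ i)"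
      unfolding nsq_def using D
      using N by (simp add: sum_distrib_left norm_mult power_mult_distrib norm_divide power_divide)
    ultimately have "sqrt ((1/N)\<^sup>2 * nsq r (mv D z)) \<le> \<epsilon>" unfolding vec_2norm_nsq nDv[symmetric] using D by simp
    hence "(1/N)\<^sup>2 * nsq r (mv D z) \<le> \<epsilon>\<^sup>2"
      by (metis real_sqrt_le_iff real_sqrt_pow2 sqrt_le_D zero_le_mult_iff zero_le_power2 nsq_nonneg)
    hence "nsq r (mv D z) \<le> \<epsilon>\<^sup>2 * N\<^sup>2" using N by (simp add: field_simps power_divide)
    thus ?thesis unfolding N_def using nsq_nonneg[of t z] by simp
  qed
qed



lemma adj_entry:
  fixes A :: "complex mat"
  assumes A: "A \<in> carrier_mat r t"
  shows "mat_adjoint A \<in> carrier_mat t r" "\<And>j l. j < t \<Longrightarrow> l < r \<Longrightarrow> mat_adjoint A $$ (j,l) = cnj (A $$ (l,j))"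
  using A by (auto simp: mat_adjoint_def mat_of_rows_def)

lemma mult_entry:
  assumes "P \<in> carrier_mat r t" "Q \<in> carrier_mat t s" "i < r" "l < s"
  shows "(P * Q) $$ (i,l) = (\<Sum>j=0..<t. P $$ (i,j) * Q $$ (j,l))"
  using assms by (simp add: scalar_prod_def)

lemma Mo_entry:
  fixes A :: "complex mat" and L :: "real mat"
  assumes A: "A \<in> carrier_mat r t" and L: "L \<in> carrier_mat t t" and Ld: "rect_diagonal L"
    and i: "i < r" and l: "l < r"
  shows "(1\<^sub>m r + A * cmat L * mat_adjoint A) $$ (i,l) =
     (if i = l then 1 else 0) + (\<Sum>j=0..<t. A $$ (i,j) * of_real (L $$ (j,j)) * cnj (A $$ (l,j)))"
proof -
  have cL: "cmat L \<in> carrier_mat t t" using L by (simp add: cmat_def)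
  have cLe: "cmat L $$ (m,j) = (if m = j then of_real (L $$ (j,j)) else 0)" if "m < t" "j < t" for m j
    using that L Ld by (auto simp: cmat_def rect_diagonal_def)
  have AL: "(A * cmat L) $$ (i,j) = A $$ (i,j) * of_real (L $$ (j,j))" if j: "j < t" for j
  proof -
    have "(A * cmat L) $$ (i,j) = (\<Sum>m=0..<t. A $$ (i,m) * cmat L $$ (m,j))"
      using A cL i j by (simp add: scalar_prod_def)
    also have "\<dots> = (\<Sum>m=0..<t. if m = j then A $$ (i,j) * of_real (L $$ (j,j)) else 0)"
      by (rule sum.cong) (use j in \<open>auto simp: cLe\<close>)
    finally show ?thesis using j by simp
  qed
  have "(A * cmat L * mat_adjoint A) $$ (i,l) = (\<Sum>j=0..<t. (A * cmat L) $$ (i,j) * mat_adjoint A $$ (j,l))"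
    by (rule mult_entry[OF _ adj_entry(1)[OF A] i l]) (use A cL in simp)
  also have "\<dots> = (\<Sum>j=0..<t. A $$ (i,j) * of_real (L $$ (j,j)) * cnj (A $$ (l,j)))"
    by (rule sum.cong) (auto simp: AL adj_entry(2)[OF A] l)
  finally show ?thesis using A cL i l adj_entry[OF A] by simp
qed

lemma sum3_swap: "(\<Sum>i\<in>I. \<Sum>l\<in>I. \<Sum>j\<in>J. f i l j) = (\<Sum>j\<in>J. \<Sum>i\<in>I. \<Sum>l\<in>I. f i l j)"
proof -
  have "(\<Sum>i\<in>I. \<Sum>l\<in>I. \<Sum>j\<in>J. f i l j) = (\<Sum>i\<in>I. \<Sum>j\<in>J. \<Sum>l\<in>I. f i l j)"
    by (rule sum.cong[OF refl], rule sum.swap)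
  also have "\<dots> = (\<Sum>j\<in>J. \<Sum>i\<in>I. \<Sum>l\<in>I. f i l j)" by (rule sum.swap)
  finally show ?thesis .
qed

lemma qf_Mo:
  fixes A :: "complex mat" and L :: "real mat"
  assumes A: "A \<in> carrier_mat r t" and L: "L \<in> carrier_mat t t" and Ld: "rect_diagonal L"
  shows "qf (1\<^sub>m r + A * cmat L * mat_adjoint A) x =
    of_real (nsq r x + (\<Sum>j=0..<t. L $$ (j,j) * (cmod (\<Sum>l=0..<r. cnj (A $$ (l,j)) * x l))\<^sup>2))"
proof -
  let ?M = "1\<^sub>m r + A * cmat L * mat_adjoint A"
  have dr: "dim_row ?M = r" using A by simp
  have "qf ?M x = (\<Sum>i=0..<r. \<Sum>l=0..<r. cnj (x i) * ((if i = l then 1 else 0) +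
       (\<Sum>j=0..<t. A $$ (i,j) * of_real (L $$ (j,j)) * cnj (A $$ (l,j)))) * x l)"
    unfolding qf_def dr by (intro sum.cong refl) (simp add: Mo_entry[OF A L Ld])
  also have "\<dots> = (\<Sum>i=0..<r. \<Sum>l=0..<r. cnj (x i) * (if i = l then 1 else 0) * x l) +
     (\<Sum>i=0..<r. \<Sum>l=0..<r. \<Sum>j=0..<t. cnj (x i) * A $$ (i,j) * of_real (L $$ (j,j)) * cnj (A $$ (l,j)) * x l)"
    by (simp add: algebra_simps sum.distrib sum_distrib_left sum_distrib_right)
  also have "(\<Sum>i=0..<r. \<Sum>l=0..<r. cnj (x i) * (if i = l then 1 else 0) * x l) = of_real (nsq r x)"
    unfolding nsq_def
    by (simp add: if_distrib[of "\<lambda>y. _ * y"] if_distrib[of "\<lambda>y. y * _"] complex_norm_square[symmetric] mult.commute del: of_real_power cong: if_cong)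
  also have "(\<Sum>i=0..<r. \<Sum>l=0..<r. \<Sum>j=0..<t. cnj (x i) * A $$ (i,j) * of_real (L $$ (j,j)) * cnj (A $$ (l,j)) * x l)
     = (\<Sum>j=0..<t. \<Sum>i=0..<r. \<Sum>l=0..<r. cnj (x i) * A $$ (i,j) * of_real (L $$ (j,j)) * cnj (A $$ (l,j)) * x l)"
    by (rule sum3_swap)
  also have "\<dots> = (\<Sum>j=0..<t. of_real (L $$ (j,j) * (cmod (\<Sum>l=0..<r. cnj (A $$ (l,j)) * x l))\<^sup>2))"
  proof (rule sum.cong[OF refl])
    fix j
    let ?w = "\<Sum>l=0..<r. cnj (A $$ (l,j)) * x l"
    have "(\<Sum>i=0..<r. \<Sum>l=0..<r. cnj (x i) * A $$ (i,j) * of_real (L $$ (j,j)) * cnj (A $$ (l,j)) * x l)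
      = of_real (L $$ (j,j)) * (cnj ?w * ?w)"
      by (simp add: sum_distrib_left sum_distrib_right ac_simps)
    also have "\<dots> = of_real (L $$ (j,j) * (cmod ?w)\<^sup>2)"
    proof -
      have "cnj ?w * ?w = of_real ((cmod ?w)\<^sup>2)" by (subst complex_norm_square) (rule mult.commute)
      thus ?thesis by simp
    qed
    finally show "(\<Sum>i=0..<r. \<Sum>l=0..<r. cnj (x i) * A $$ (i,j) * of_real (L $$ (j,j)) * cnj (A $$ (l,j)) * x l)
      = of_real (L $$ (j,j) * (cmod ?w)\<^sup>2)" .
  qed
  finally show ?thesis by simp
qed

lemma cs2: fixes c m l P Q :: real
  assumes "l > 0" "c\<^sup>2 + m\<^sup>2 / l = 1"
  shows "(c * P + m * Q)\<^sup>2 \<le> P\<^sup>2 + l * Q\<^sup>2"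
proof -
  have "l * (P\<^sup>2 + l * Q\<^sup>2 - (c * P + m * Q)\<^sup>2) = (m * P - c * l * Q)\<^sup>2"
  proof -
    have e: "m\<^sup>2 = l * (1 - c\<^sup>2)" using assms by (simp add: field_simps)
    show ?thesis by (simp add: power2_eq_square algebra_simps e[unfolded power2_eq_square])
  qed
  hence "l * (P\<^sup>2 + l * Q\<^sup>2 - (c * P + m * Q)\<^sup>2) \<ge> 0" by simp
  thus ?thesis using assms(1) by (simp add: zero_le_mult_iff)
qed

lemma sum_restrict_S:
  assumes "S \<subseteq> {0..<(m::nat)}" "\<And>i. i < m \<Longrightarrow> i \<notin> S \<Longrightarrow> f i = 0"
  shows "(\<Sum>i=0..<m. f i) = (\<Sum>i\<in>S. f i)"
  by (rule sum.mono_neutral_right) (use assms in auto)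

lemma cauchy_cmod:
  "cmod (\<Sum>l=0..<n. a l * cnj (b l)) \<le> sqrt (nsq n a) * sqrt (nsq n b)"
proof -
  have "cmod (\<Sum>l=0..<n. a l * cnj (b l)) \<le> (\<Sum>l=0..<n. \<bar>cmod (a l)\<bar> * \<bar>cmod (b l)\<bar>)"
    by (rule order_trans[OF norm_sum]) (simp add: norm_mult)
  also have "\<dots> \<le> L2_set (\<lambda>l. cmod (a l)) {0..<n} * L2_set (\<lambda>l. cmod (b l)) {0..<n}"
    by (rule L2_set_mult_ineq)
  finally show ?thesis unfolding L2_set_def nsq_def by simp
qed




lemma main_lower:
  fixes r t :: nat and \<epsilon> :: real and \<Sigma> \<Lambda> :: "real mat" and \<Delta> :: "complex mat"
  assumes eps: "\<epsilon> \<ge> 0"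
    and Sc: "\<Sigma> \<in> carrier_mat r t" and Sd: "rect_diagonal \<Sigma>"
    and Spos: "\<forall>i < min r t. \<Sigma> $$ (i,i) \<ge> 0"
    and Lc: "\<Lambda> \<in> carrier_mat t t" and Ld: "rect_diagonal \<Lambda>"
    and Lpos: "\<forall>i < t. \<Lambda> $$ (i,i) \<ge> 0"
    and Dc: "\<Delta> \<in> carrier_mat r t" and Dn: "spectral_norm \<Delta> \<le> \<epsilon>"
  shows "Re (objective r \<Sigma> \<Lambda> \<Delta>) \<ge>
    (\<Prod>i=0..<r. if i < min r t then 1 + \<Lambda> $$ (i,i) * (max (\<Sigma> $$ (i,i) - \<epsilon>) 0)\<^sup>2 else 1)"
proof -
  define k where "k = min r t"
  define \<sigma> where "\<sigma> i = \<Sigma> $$ (i,i)" for i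
  define lam where "lam i = \<Lambda> $$ (i,i)" for i
  define S where "S = {i. i < k \<and> lam i > 0 \<and> \<sigma> i > \<epsilon>}"
  define d where "d i = \<sigma> i - \<epsilon>" for i
  define a where "a i = sqrt (1 + lam i * (d i)\<^sup>2)" for i
  define c where "c i = 1 / a i" for i
  define \<mu> where "\<mu> i = lam i * d i / a i" for i
  define g where "g i = 1 / (lam i * d i)" for i
  define A where "A = cmat \<Sigma> + \<Delta>"
  define Mo where "Mo = 1\<^sub>m r + A * cmat \<Lambda> * mat_adjoint A"
  define \<delta> :: "nat \<Rightarrow> nat \<Rightarrow> complex" where "\<delta> i l = (if i = l then 1 else 0)" for i l
  define X where "X = mat r r (\<lambda>(i,l). if i \<in> S then of_real (c i) * \<delta> i l + of_real (\<mu> i) * cnj (A $$ (l,i)) else \<delta> i l)"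
  have Sk: "S \<subseteq> {0..<k}" unfolding S_def by auto
  have Sr: "S \<subseteq> {0..<r}" and St: "S \<subseteq> {0..<t}" using Sk unfolding k_def by auto
  have Spr: "lam i > 0" "d i > 0" "a i > 0" "\<mu> i > 0" "g i > 0" "c i > 0" if "i \<in> S" for i
  proof -
    show l: "lam i > 0" and dd: "d i > 0" using that unfolding S_def d_def by auto
    show aa: "a i > 0" unfolding a_def using l by (intro real_sqrt_gt_zero) (simp add: add_pos_nonneg)
    show "\<mu> i > 0" unfolding \<mu>_def using l dd aa by simp
    show "g i > 0" unfolding g_def using l dd by simp
    show "c i > 0" unfolding c_def using aa by simp
  qed
  have asq: "(a i)\<^sup>2 = 1 + lam i * (d i)\<^sup>2" if "i \<in> S" for i
    unfolding a_def using Spr[OF that] by (simp add: add_pos_nonneg)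
  have Ac: "A \<in> carrier_mat r t" unfolding A_def using Sc Dc by (simp add: cmat_def)
  have Aent: "A $$ (i,j) = (if i = j then of_real (\<sigma> i) else 0) + \<Delta> $$ (i,j)" if "i < r" "j < t" for i j
    unfolding A_def \<sigma>_def using that Sc Dc Sd by (auto simp: cmat_def rect_diagonal_def)
  have Moc: "Mo \<in> carrier_mat r r" unfolding Mo_def using Ac Lc adj_entry(1)[OF Ac] by (simp add: cmat_def)
  have Xc: "X \<in> carrier_mat r r" unfolding X_def by simp
  have part1: "Re (det Mo) \<ge> (cmod (det X))\<^sup>2"
  proof (rule L2[OF Moc Xc])
    fix x
    define w where "w j = (\<Sum>l=0..<r. cnj (A $$ (l,j)) * x l)" for j
    define q where "q = nsq r x + (\<Sum>j=0..<t. lam j * (cmod (w j))\<^sup>2)"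
    have qf: "qf Mo x = of_real q" unfolding Mo_def q_def w_def lam_def by (rule qf_Mo[OF Ac Lc Ld])
    have nn: "(\<Sum>j=0..<t. lam j * (cmod (w j))\<^sup>2) \<ge> 0"
      using Lpos unfolding lam_def by (intro sum_nonneg) auto
    have mvX: "mv X x i = (if i \<in> S then of_real (c i) * x i + of_real (\<mu> i) * w i else x i)" if i: "i < r" for i
    proof -
      have "mv X x i = (\<Sum>l=0..<r. X $$ (i,l) * x l)" unfolding mv_def using Xc by simp
      also have "\<dots> = (if i \<in> S then (\<Sum>l=0..<r. of_real (c i) * \<delta> i l * x l) + of_real (\<mu> i) * w i
          else (\<Sum>l=0..<r. \<delta> i l * x l))"
        unfolding X_def w_def using i
        by (auto simp: sum.distrib sum_distrib_left algebra_simps)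
      also have "(\<Sum>l=0..<r. of_real (c i) * \<delta> i l * x l) = of_real (c i) * x i"
        unfolding \<delta>_def using i by (simp add: if_distrib[of "\<lambda>y. y * _"] if_distrib[of "\<lambda>y. _ * y"] cong: if_cong)
      also have "(\<Sum>l=0..<r. \<delta> i l * x l) = x i"
        unfolding \<delta>_def using i by (simp add: if_distrib[of "\<lambda>y. y * _"] cong: if_cong)
      finally show ?thesis .
    qed
    have bnd: "(cmod (mv X x i))\<^sup>2 \<le> (cmod (x i))\<^sup>2 + (if i \<in> S then lam i * (cmod (w i))\<^sup>2 else 0)"
      if i: "i < r" for i
    proof (cases "i \<in> S")
      case True
      have "cmod (mv X x i) \<le> c i * cmod (x i) + \<mu> i * cmod (w i)"
      proof -
        have "cmod (mv X x i) = cmod (of_real (c i) * x i + of_real (\<mu> i) * w i)"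
          unfolding mvX[OF i] using True by simp
        also have "\<dots> \<le> cmod (of_real (c i) * x i) + cmod (of_real (\<mu> i) * w i)" by (rule norm_triangle_ineq)
        also have "\<dots> = c i * cmod (x i) + \<mu> i * cmod (w i)"
          using Spr[OF True] by (simp add: norm_mult)
        finally show ?thesis .
      qed
      hence "(cmod (mv X x i))\<^sup>2 \<le> (c i * cmod (x i) + \<mu> i * cmod (w i))\<^sup>2"
        by (intro power_mono) auto
      also have "\<dots> \<le> (cmod (x i))\<^sup>2 + lam i * (cmod (w i))\<^sup>2"
      proof (rule cs2)
        show "lam i > 0" using Spr[OF True] by simp
        have "(c i)\<^sup>2 + (\<mu> i)\<^sup>2 / lam i = (1 + lam i * (d i)\<^sup>2) / (a i)\<^sup>2"
          unfolding c_def \<mu>_def using Spr[OF True] by (simp add: field_simps power2_eq_square)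
        moreover have "1 + lam i * (d i)\<^sup>2 > 0" using Spr[OF True] by (simp add: add_pos_nonneg)
        ultimately show "(c i)\<^sup>2 + (\<mu> i)\<^sup>2 / lam i = 1" using asq[OF True] by simp
      qed
      finally show ?thesis using True by simp
    qed (simp add: mvX[OF i])
    have "nsq r (mv X x) \<le> nsq r x + (\<Sum>i=0..<r. if i \<in> S then lam i * (cmod (w i))\<^sup>2 else 0)"
      unfolding nsq_def sum.distrib[symmetric] by (intro sum_mono) (use bnd in auto)
    also have "(\<Sum>i=0..<r. if i \<in> S then lam i * (cmod (w i))\<^sup>2 else 0) = (\<Sum>i\<in>S. lam i * (cmod (w i))\<^sup>2)"
      by (rule trans[OF sum_restrict_S[OF Sr]]) auto
    also have "\<dots> \<le> (\<Sum>j=0..<t. lam j * (cmod (w j))\<^sup>2)"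
      by (rule sum_mono2) (use St Lpos in \<open>auto simp: lam_def\<close>)
    finally have "nsq r (mv X x) \<le> q" unfolding q_def by simp
    thus "\<exists>q. qf Mo x = of_real q \<and> q \<ge> nsq r x \<and> q \<ge> nsq r (mv X x)"
    proof (intro exI conjI)
      show "qf Mo x = of_real q" by (rule qf)
      show "nsq r x \<le> q" using nn unfolding q_def by simp
    qed
  qed
  define Y where "Y = mat r r (\<lambda>(i,l). if i \<in> S then of_real (g i) * \<delta> i l + cnj (A $$ (l,i)) else \<delta> i l)"
  define Dm where "Dm = dmat r (\<lambda>i. if i \<in> S then of_real (\<mu> i) else 1)"
  define F where "F = mat r r (\<lambda>(i,l). if i \<in> S \<and> l \<notin> S then Y $$ (i,l) else 0)"
  define Y' where "Y' = mat r r (\<lambda>(i,l). if i \<in> S then (if l \<in> S then Y $$ (i,l) else 0) else \<delta> i l)"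
  have Yc: "Y \<in> carrier_mat r r" and Fc: "F \<in> carrier_mat r r" and Y'c: "Y' \<in> carrier_mat r r"
    unfolding Y_def F_def Y'_def by auto
  have XDY: "X = Dm * Y"
    unfolding Dm_def dmat_mult_left[OF Yc]
  proof (rule eq_matI)
    fix i l assume "i < dim_row (mat r r (\<lambda>(i, j). (if i \<in> S then complex_of_real (\<mu> i) else 1) * Y $$ (i, j)))"
      "l < dim_col (mat r r (\<lambda>(i, j). (if i \<in> S then complex_of_real (\<mu> i) else 1) * Y $$ (i, j)))"
    hence il: "i < r" "l < r" by auto
    show "X $$ (i,l) = mat r r (\<lambda>(i, j). (if i \<in> S then complex_of_real (\<mu> i) else 1) * Y $$ (i, j)) $$ (i,l)"
    proof (cases "i \<in> S")
      case True
      have "\<mu> i * g i = c i" unfolding \<mu>_def g_def c_def using Spr[OF True] by (simp add: field_simps)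
      hence "of_real (\<mu> i) * of_real (g i) = (of_real (c i) :: complex)" by (metis of_real_mult)
      thus ?thesis using il True unfolding X_def Y_def by (simp add: algebra_simps)
    qed (use il in \<open>simp add: X_def Y_def\<close>)
  qed (auto simp: X_def)
  have YFY: "Y = (1\<^sub>m r + F) * Y'"
  proof (rule eq_matI)
    fix i l assume "i < dim_row ((1\<^sub>m r + F) * Y')" "l < dim_col ((1\<^sub>m r + F) * Y')"
    hence il: "i < r" "l < r" using Fc Y'c by auto
    have "((1\<^sub>m r + F) * Y') $$ (i,l) = (\<Sum>j=0..<r. (\<delta> i j + F $$ (i,j)) * Y' $$ (j,l))"
      using il Fc Y'c by (subst mult_entry[of _ r r _ r]) (auto simp: \<delta>_def)
    also have "\<dots> = (\<Sum>j=0..<r. \<delta> i j * Y' $$ (j,l)) + (\<Sum>j=0..<r. F $$ (i,j) * Y' $$ (j,l))"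
      by (simp add: algebra_simps sum.distrib)
    also have "(\<Sum>j=0..<r. \<delta> i j * Y' $$ (j,l)) = Y' $$ (i,l)"
      using il by (simp add: \<delta>_def if_distrib[of "\<lambda>y. y * _"] cong: if_cong)
    also have "(\<Sum>j=0..<r. F $$ (i,j) * Y' $$ (j,l)) = (\<Sum>j=0..<r. if j = l then (if i \<in> S \<and> l \<notin> S then Y $$ (i,l) else 0) else 0)"
      by (rule sum.cong) (use il in \<open>auto simp: F_def Y'_def \<delta>_def\<close>)
    also have "\<dots> = (if i \<in> S \<and> l \<notin> S then Y $$ (i,l) else 0)" using il by simp
    finally show "Y $$ (i,l) = ((1\<^sub>m r + F) * Y') $$ (i,l)"
      using il unfolding Y'_def Y_def by (auto simp: \<delta>_def)
  qed (use Yc Fc Y'c in auto)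
  have FF: "F * F = 0\<^sub>m r r"
  proof (rule eq_matI)
    fix i l assume "i < dim_row (0\<^sub>m r r :: complex mat)" "l < dim_col (0\<^sub>m r r :: complex mat)"
    hence il: "i < r" "l < r" by auto
    have "(F * F) $$ (i,l) = (\<Sum>j=0..<r. F $$ (i,j) * F $$ (j,l))" using il Fc by (intro mult_entry[of _ r r _ r])
    also have "\<dots> = 0" by (rule sum.neutral) (use il in \<open>auto simp: F_def\<close>)
    finally show "(F * F) $$ (i,l) = 0\<^sub>m r r $$ (i,l)" using il by simp
  qed (use Fc in auto)
  have detX: "det X = (\<Prod>i=0..<r. if i \<in> S then of_real (\<mu> i) else 1) * det Y'"
  proof -
    have "det X = det Dm * det Y" unfolding XDY Dm_def using Yc by (rule det_mult[OF dmat_carrier])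
    also have "det Y = det (1\<^sub>m r + F) * det Y'" unfolding YFY using Fc Y'c by (intro det_mult) auto
    also have "det (1\<^sub>m r + F) = 1" by (rule det_nil[OF Fc FF])
    finally show ?thesis unfolding Dm_def det_dmat by simp
  qed
  define nn where "nn i = (if i \<in> S then g i + d i else 1)" for i
  have nnpos: "nn i > 0" if "i < r" for i
  proof (cases "i \<in> S")
    case True thus ?thesis unfolding nn_def using Spr(2,5)[OF True] by simp
  qed (simp add: nn_def)
  have Aent': "cnj (A $$ (l,i)) = (if l = i then of_real (\<sigma> i) else 0) + cnj (\<Delta> $$ (l,i))" if "l < r" "i \<in> S" for l i
    using Aent[of l i] that St by auto
  have Y'bound: "Re (qf Y' x) \<ge> (\<Sum>i=0..<r. nn i * (cmod (x i))\<^sup>2)" for x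
  proof -
    define coef where "coef i = (if i \<in> S then g i + \<sigma> i else 1)" for i
    define K where "K = (\<Sum>i=0..<r. \<Sum>l=0..<r. if i \<in> S \<and> l \<in> S then cnj (x i) * cnj (\<Delta> $$ (l,i)) * x l else 0)"
    have row: "(\<Sum>l=0..<r. cnj (x i) * Y' $$ (i,l) * x l) = of_real (coef i * (cmod (x i))\<^sup>2) +
       (\<Sum>l=0..<r. if i \<in> S \<and> l \<in> S then cnj (x i) * cnj (\<Delta> $$ (l,i)) * x l else 0)" if i: "i < r" for i
    proof (cases "i \<in> S")
      case True
      have "(\<Sum>l=0..<r. cnj (x i) * Y' $$ (i,l) * x l) = (\<Sum>l=0..<r.
          (if l = i then of_real (g i + \<sigma> i) * (x i * cnj (x i)) else 0) +
          (if l \<in> S then cnj (x i) * cnj (\<Delta> $$ (l,i)) * x l else 0))"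
        by (rule sum.cong[OF refl]) (use True i in \<open>auto simp: Y'_def Y_def \<delta>_def Aent' algebra_simps\<close>)
      also have "\<dots> = of_real (g i + \<sigma> i) * (x i * cnj (x i)) +
          (\<Sum>l=0..<r. if l \<in> S then cnj (x i) * cnj (\<Delta> $$ (l,i)) * x l else 0)"
        using i by (simp add: sum.distrib)
      finally show ?thesis using True unfolding coef_def
        by (simp add: complex_norm_square[symmetric] del: of_real_power)
    next
      case False
      have "(\<Sum>l=0..<r. cnj (x i) * Y' $$ (i,l) * x l) = (\<Sum>l=0..<r. if l = i then x i * cnj (x i) else 0)"
        by (rule sum.cong[OF refl]) (use False i in \<open>auto simp: Y'_def \<delta>_def\<close>)
      thus ?thesis using False i unfolding coef_def
        by (simp add: complex_norm_square[symmetric] del: of_real_power)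
    qed
    have qfY': "qf Y' x = of_real (\<Sum>i=0..<r. coef i * (cmod (x i))\<^sup>2) + K"
      unfolding qf_def K_def using Y'c by (simp add: row sum.distrib)
    define z where "z i = (if i \<in> S then x i else 0)" for i
    have nz: "nsq t z = nsq r z"
      unfolding nsq_def using sum_restrict_S[OF Sr, of "\<lambda>i. (cmod (z i))\<^sup>2"] sum_restrict_S[OF St, of "\<lambda>i. (cmod (z i))\<^sup>2"]
      by (simp add: z_def)
    have nz2: "nsq r z = (\<Sum>i=0..<r. (if i \<in> S then 1 else 0) * (cmod (x i))\<^sup>2)"
      unfolding nsq_def z_def by (rule sum.cong) auto
    have K2: "K = (\<Sum>l=0..<r. z l * cnj (mv \<Delta> z l))"
    proof -
      have "K = (\<Sum>i=0..<r. \<Sum>l=0..<r. cnj (z i) * cnj (\<Delta> $$ (l,i)) * z l)"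
        unfolding K_def z_def by (intro sum.cong refl) auto
      also have "\<dots> = (\<Sum>l=0..<r. \<Sum>i=0..<r. z l * cnj (\<Delta> $$ (l,i) * z i))"
        by (subst sum.swap) (simp add: ac_simps)
      also have "\<dots> = (\<Sum>l=0..<r. z l * cnj (mv \<Delta> z l))"
      proof (rule sum.cong[OF refl])
        fix l
        have "(\<Sum>i=0..<r. \<Delta> $$ (l,i) * z i) = (\<Sum>i\<in>S. \<Delta> $$ (l,i) * z i)"
          by (rule sum_restrict_S[OF Sr]) (simp add: z_def)
        also have "\<dots> = (\<Sum>i=0..<t. \<Delta> $$ (l,i) * z i)"
          by (rule sum_restrict_S[OF St, symmetric]) (simp add: z_def)
        also have "\<dots> = mv \<Delta> z l" unfolding mv_def using Dc by simp
        finally have e: "(\<Sum>i=0..<r. \<Delta> $$ (l,i) * z i) = mv \<Delta> z l" .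
        have "(\<Sum>i=0..<r. z l * cnj (\<Delta> $$ (l,i) * z i)) = z l * cnj (\<Sum>i=0..<r. \<Delta> $$ (l,i) * z i)"
          by (simp only: sum_distrib_left cnj_sum)
        thus "(\<Sum>i=0..<r. z l * cnj (\<Delta> $$ (l,i) * z i)) = z l * cnj (mv \<Delta> z l)"
          by (simp only: e)
      qed
      finally show ?thesis .
    qed
    have c1: "cmod K \<le> sqrt (nsq r z) * sqrt (nsq r (mv \<Delta> z))" unfolding K2 by (rule cauchy_cmod)
    have c2: "sqrt (nsq r (mv \<Delta> z)) \<le> \<epsilon> * sqrt (nsq r z)"
    proof -
      have "sqrt (nsq r (mv \<Delta> z)) \<le> sqrt (\<epsilon>\<^sup>2 * nsq r z)"
        using spec_bound[OF Dc Dn, of z] nz by simp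
      also have "sqrt (\<epsilon>\<^sup>2 * nsq r z) = \<epsilon> * sqrt (nsq r z)" using eps by (simp add: real_sqrt_mult)
      finally show ?thesis .
    qed
    have "cmod K \<le> sqrt (nsq r z) * (\<epsilon> * sqrt (nsq r z))"
      using order_trans[OF c1 mult_left_mono[OF c2 real_sqrt_ge_zero[OF nsq_nonneg[of r z]]]] .
    also have "sqrt (nsq r z) * (\<epsilon> * sqrt (nsq r z)) = \<epsilon> * (sqrt (nsq r z) * sqrt (nsq r z))" by simp
    also have "\<dots> = \<epsilon> * nsq r z" using nsq_nonneg[of r z] by simp
    finally have "cmod K \<le> \<epsilon> * nsq r z" .
    hence "Re K \<ge> - (\<epsilon> * nsq r z)" using abs_Re_le_cmod[of K] by linarith
    hence "Re (qf Y' x) \<ge> (\<Sum>i=0..<r. coef i * (cmod (x i))\<^sup>2) - \<epsilon> * nsq r z" unfolding qfY' by simp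
    also have "(\<Sum>i=0..<r. coef i * (cmod (x i))\<^sup>2) - \<epsilon> * nsq r z = (\<Sum>i=0..<r. nn i * (cmod (x i))\<^sup>2)"
      unfolding nz2 sum_distrib_left sum_subtractf[symmetric]
      by (rule sum.cong) (auto simp: coef_def nn_def d_def algebra_simps)
    finally show ?thesis .
  qed
  have cY': "cmod (det Y') \<ge> (\<Prod>i=0..<r. nn i)" by (rule L3w[OF Y'c nnpos Y'bound])
  define pm where "pm i = (if i \<in> S then \<mu> i else 1)" for i
  have pmpos: "pm i > 0" for i unfolding pm_def using Spr by auto
  have "cmod (det X) = (\<Prod>i=0..<r. pm i) * cmod (det Y')"
  proof -
    have "cmod (\<Prod>i=0..<r. if i \<in> S then (of_real (\<mu> i) :: complex) else 1) = (\<Prod>i=0..<r. cmod (if i \<in> S then (of_real (\<mu> i) :: complex) else 1))"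
      by (rule prod_norm[symmetric])
    also have "\<dots> = (\<Prod>i=0..<r. pm i)" by (rule prod.cong) (auto simp: pm_def dest: Spr)
    finally show ?thesis unfolding detX norm_mult by simp
  qed
  also have "\<dots> \<ge> (\<Prod>i=0..<r. pm i) * (\<Prod>i=0..<r. nn i)"
    using cY' pmpos by (intro mult_left_mono) (auto intro: prod_nonneg less_imp_le)
  finally have cX: "cmod (det X) \<ge> (\<Prod>i=0..<r. pm i * nn i)" by (simp add: prod.distrib)
  have pmnn: "pm i * nn i = (if i \<in> S then a i else 1)" for i
  proof (cases "i \<in> S")
    case True
    have "\<mu> i * (g i + d i) = (1 + lam i * (d i)\<^sup>2) / a i"
      unfolding \<mu>_def g_def using Spr[OF True] by (simp add: field_simps power2_eq_square)
    also have "\<dots> = a i" using asq[OF True] Spr[OF True] by (simp add: field_simps power2_eq_square)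
    finally show ?thesis using True by (simp add: pm_def nn_def)
  qed (simp add: pm_def nn_def)
  have pge: "(\<Prod>i=0..<r. if i \<in> S then a i else 1) \<ge> 0" using Spr by (intro prod_nonneg) (auto intro: less_imp_le)
  have part2: "(cmod (det X))\<^sup>2 \<ge> (\<Prod>i=0..<r. if i < min r t then 1 + \<Lambda> $$ (i,i) * (max (\<Sigma> $$ (i,i) - \<epsilon>) 0)\<^sup>2 else 1)"
  proof -
    have "(\<Prod>i=0..<r. if i < min r t then 1 + \<Lambda> $$ (i,i) * (max (\<Sigma> $$ (i,i) - \<epsilon>) 0)\<^sup>2 else 1)
       = (\<Prod>i=0..<r. (if i \<in> S then a i else 1)\<^sup>2)"
    proof (rule prod.cong[OF refl])
      fix i assume i: "i \<in> {0..<r}"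
      show "(if i < min r t then 1 + \<Lambda> $$ (i,i) * (max (\<Sigma> $$ (i,i) - \<epsilon>) 0)\<^sup>2 else 1) = (if i \<in> S then a i else 1)\<^sup>2"
      proof (cases "i \<in> S")
        case True
        hence "i < min r t" "max (\<Sigma> $$ (i,i) - \<epsilon>) 0 = d i" using Spr[OF True] Sk
          unfolding k_def d_def \<sigma>_def by auto
        thus ?thesis using asq[OF True] True unfolding lam_def by simp
      next
        case False
        have "i < min r t \<Longrightarrow> \<Lambda> $$ (i,i) * (max (\<Sigma> $$ (i,i) - \<epsilon>) 0)\<^sup>2 = 0"
        proof -
          assume ik: "i < min r t"
          hence "\<Lambda> $$ (i,i) \<ge> 0" using Lpos by auto
          with False ik have "\<Lambda> $$ (i,i) = 0 \<or> \<Sigma> $$ (i,i) \<le> \<epsilon>"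
            unfolding S_def k_def lam_def \<sigma>_def by auto
          thus ?thesis by auto
        qed
        thus ?thesis using False by auto
      qed
    qed
    also have "\<dots> = (\<Prod>i=0..<r. if i \<in> S then a i else 1)\<^sup>2" by (simp add: prod_power_distrib)
    also have "\<dots> \<le> (cmod (det X))\<^sup>2"
      using cX pge unfolding pmnn by (intro power_mono) auto
    finally show ?thesis .
  qed
  have "objective r \<Sigma> \<Lambda> \<Delta> = det Mo" unfolding objective_def Mo_def A_def ..
  thus ?thesis using part1 part2 by simp
qed

theorem lemma1:
  fixes r t :: nat and \<epsilon> :: real and \<Sigma> \<Lambda> :: "real mat"
  assumes "r \<ge> 1" and "t \<ge> 1" and "\<epsilon> \<ge> 0"
    and "\<Sigma> \<in> carrier_mat r t" and "rect_diagonal \<Sigma>"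
    and "\<forall>i < min r t. \<Sigma> $$ (i,i) \<ge> 0"
    and "\<Lambda> \<in> carrier_mat t t" and "rect_diagonal \<Lambda>"
    and "\<forall>i < t. \<Lambda> $$ (i,i) \<ge> 0"
  shows "\<exists>\<Delta> \<in> carrier_mat r t. rect_diagonal \<Delta> \<and> spectral_norm \<Delta> \<le> \<epsilon> \<and>
           (\<forall>\<Delta>' \<in> carrier_mat r t. spectral_norm \<Delta>' \<le> \<epsilon> \<longrightarrow>
              Re (objective r \<Sigma> \<Lambda> \<Delta>) \<le> Re (objective r \<Sigma> \<Lambda> \<Delta>'))"
proof -
  note eps = assms(3) and Sc = assms(4) and Sd = assms(5) and Spos = assms(6)
    and Lc = assms(7) and Ld = assms(8) and Lpos = assms(9)
  define T where "T = (\<Prod>i=0..<r. if i < min r t then 1 + \<Lambda> $$ (i,i) * (max (\<Sigma> $$ (i,i) - \<epsilon>) 0)\<^sup>2 else 1)"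
  define D0 :: "complex mat" where "D0 = mat r t (\<lambda>(i,j). if i = j then - of_real (min (\<Sigma> $$ (i,i)) \<epsilon>) else 0)"
  have D0c: "D0 \<in> carrier_mat r t" unfolding D0_def by simp
  have D0d: "rect_diagonal D0" unfolding D0_def rect_diagonal_def by simp
  have D0n: "spectral_norm D0 \<le> \<epsilon>"
    unfolding spectral_norm_def
  proof (rule cSup_least)
    show "{vec_2norm (D0 *\<^sub>v x) |x. x \<in> carrier_vec (dim_col D0) \<and> vec_2norm x \<le> 1} \<noteq> {}"
    proof -
      have "vec_2norm (D0 *\<^sub>v 0\<^sub>v t) \<in> {vec_2norm (D0 *\<^sub>v x) |x. x \<in> carrier_vec (dim_col D0) \<and> vec_2norm x \<le> 1}"
        using D0c by (auto intro!: exI[of _ "0\<^sub>v t"] simp: vec_2norm_def)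
      thus ?thesis by blast
    qed
  next
    fix y assume "y \<in> {vec_2norm (D0 *\<^sub>v x) |x. x \<in> carrier_vec (dim_col D0) \<and> vec_2norm x \<le> 1}"
    then obtain x where x: "x \<in> carrier_vec t" "vec_2norm x \<le> 1" "y = vec_2norm (D0 *\<^sub>v x)"
      using D0c by auto
    have ent: "(cmod ((D0 *\<^sub>v x) $ i))\<^sup>2 \<le> (if i < t then \<epsilon>\<^sup>2 * (cmod (x $ i))\<^sup>2 else 0)" if i: "i < r" for i
    proof -
      have "(D0 *\<^sub>v x) $ i = (\<Sum>j=0..<t. (if i = j then - of_real (min (\<Sigma> $$ (i,i)) \<epsilon>) else 0) * x $ j)"
        using x(1) i unfolding D0_def by (simp add: scalar_prod_def)
      also have "\<dots> = (if i < t then - of_real (min (\<Sigma> $$ (i,i)) \<epsilon>) * x $ i else 0)"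
        by (simp add: if_distrib[of "\<lambda>y. y * _"] cong: if_cong)
      finally have e: "(D0 *\<^sub>v x) $ i = (if i < t then - of_real (min (\<Sigma> $$ (i,i)) \<epsilon>) * x $ i else 0)" .
      show ?thesis
      proof (cases "i < t")
        case True
        hence "\<Sigma> $$ (i,i) \<ge> 0" using Spos i by auto
        hence m: "\<bar>min (\<Sigma> $$ (i,i)) \<epsilon>\<bar> \<le> \<epsilon>" using eps by auto
        have "(cmod ((D0 *\<^sub>v x) $ i))\<^sup>2 = (\<bar>min (\<Sigma> $$ (i,i)) \<epsilon>\<bar> * cmod (x $ i))\<^sup>2"
          unfolding e using True by (simp add: norm_mult)
        also have "\<dots> \<le> (\<epsilon> * cmod (x $ i))\<^sup>2"
          by (intro power_mono mult_right_mono m) auto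
        finally show ?thesis using True by (simp add: power_mult_distrib)
      qed (simp add: e)
    qed
    have "nsq r (\<lambda>i. (D0 *\<^sub>v x) $ i) \<le> (\<Sum>i=0..<r. if i < t then \<epsilon>\<^sup>2 * (cmod (x $ i))\<^sup>2 else 0)"
      unfolding nsq_def by (rule sum_mono) (use ent in auto)
    also have "\<dots> = (\<Sum>i\<in>{i\<in>{0..<r}. i < t}. \<epsilon>\<^sup>2 * (cmod (x $ i))\<^sup>2)"
      by (rule sum.inter_filter[symmetric]) simp
    also have "\<dots> \<le> (\<Sum>i=0..<t. \<epsilon>\<^sup>2 * (cmod (x $ i))\<^sup>2)"
      by (rule sum_mono2) auto
    also have "\<dots> = \<epsilon>\<^sup>2 * nsq t (\<lambda>i. x $ i)" unfolding nsq_def by (simp add: sum_distrib_left)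
    also have "\<dots> \<le> \<epsilon>\<^sup>2 * 1"
    proof -
      have "sqrt (nsq t (\<lambda>i. x $ i)) \<le> 1" using x(1,2) unfolding vec_2norm_nsq by simp
      hence "nsq t (\<lambda>i. x $ i) \<le> 1" by simp
      thus ?thesis by (intro mult_left_mono) auto
    qed
    finally have "nsq r (\<lambda>i. (D0 *\<^sub>v x) $ i) \<le> \<epsilon>\<^sup>2" by simp
    hence "sqrt (nsq r (\<lambda>i. (D0 *\<^sub>v x) $ i)) \<le> sqrt (\<epsilon>\<^sup>2)" by (rule real_sqrt_le_mono)
    thus "y \<le> \<epsilon>" unfolding x(3) vec_2norm_nsq using D0c eps by simp
  qed
  have obj0: "Re (objective r \<Sigma> \<Lambda> D0) = T"
  proof -
    define A0 where "A0 = cmat \<Sigma> + D0"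
    have A0c: "A0 \<in> carrier_mat r t" unfolding A0_def using Sc D0c by (simp add: cmat_def)
    define m where "m i = max (\<Sigma> $$ (i,i) - \<epsilon>) 0" for i
    have A0e: "A0 $$ (i,j) = (if i = j then of_real (m i) else 0)" if "i < r" "j < t" for i j
      using that Sc Sd unfolding A0_def D0_def m_def
      by (auto simp: cmat_def rect_diagonal_def simp flip: of_real_diff)
    define v where "v i = (if i < min r t then 1 + \<Lambda> $$ (i,i) * (m i)\<^sup>2 else 1)" for i
    have "1\<^sub>m r + A0 * cmat \<Lambda> * mat_adjoint A0 = dmat r (\<lambda>i. of_real (v i))"
    proof (rule eq_matI)
      fix i l assume "i < dim_row (dmat r (\<lambda>i. of_real (v i)))" "l < dim_col (dmat r (\<lambda>i. complex_of_real (v i)))"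
      hence il: "i < r" "l < r" by (auto simp: dmat_def)
      have "(\<Sum>j=0..<t. A0 $$ (i,j) * of_real (\<Lambda> $$ (j,j)) * cnj (A0 $$ (l,j))) =
         (\<Sum>j=0..<t. if j = i \<and> j = l then of_real (\<Lambda> $$ (j,j) * (m j)\<^sup>2) else 0)"
        by (rule sum.cong[OF refl]) (use il in \<open>auto simp: A0e power2_eq_square\<close>)
      also have "\<dots> = (if i = l \<and> i < t then of_real (\<Lambda> $$ (i,i) * (m i)\<^sup>2) else 0)"
        by (auto simp: sum.delta)
      finally show "(1\<^sub>m r + A0 * cmat \<Lambda> * mat_adjoint A0) $$ (i,l) = dmat r (\<lambda>i. of_real (v i)) $$ (i,l)"
        unfolding Mo_entry[OF A0c Lc Ld il] using il by (auto simp: dmat_def v_def)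
    qed (use A0c adj_entry(1)[OF A0c] in \<open>auto simp: dmat_def cmat_def\<close>)
    hence "objective r \<Sigma> \<Lambda> D0 = (\<Prod>i=0..<r. of_real (v i))"
      unfolding objective_def A0_def[symmetric] by (simp add: det_dmat)
    also have "\<dots> = of_real T" unfolding T_def v_def m_def by simp
    finally show ?thesis by simp
  qed
  show ?thesis
  proof (intro bexI[of _ D0] conjI ballI impI)
    fix D' :: "complex mat" assume "D' \<in> carrier_mat r t" "spectral_norm D' \<le> \<epsilon>"
    from main_lower[OF eps Sc Sd Spos Lc Ld Lpos this]
    show "Re (objective r \<Sigma> \<Lambda> D0) \<le> Re (objective r \<Sigma> \<Lambda> D')" unfolding obj0 T_def by simp
  qed (use D0c D0d D0n in auto)
qed


end
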